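(* Let $S=(P,L)$ be a finite $(2,t)$-generalized quadrangle and let $(R,\psi)$ be a faithful representation of $S$, with $\psi(x)=\langle r_x\rangle$ and $R_\psi=\{r_x:x\in P\}$. Assume that $(t,|R|)\neq(2,2^4)$. If $x,y\in P$ are distinct and $r_xr_y\in R_\psi$, then $x$ and $y$ are collinear.
   Context: A $(2,t)$-generalized quadrangle is a partial linear space in which every line has exactly $3$ points, every point lies on exactly $t+1$ lines, no point is collinear with all points, and for every point $x$ and line $\ell$ with $x\notin\ell$, $x$ is collinear with exactly one point of $\ell$. A representation $(R,\psi)$ of $S$ is a group $R$ with a map $\psi$ assigning to each point $x$ a subgroup $\psi(x)=\langle r_x\rangle$ of order $2$, such that $R$ is generated by the $r_x$ and, for every line $\{x,y,z\}$, $\{1,r_x,r_y,r_z\}$ is a Klein four subgroup. It is faithful if $\psi$ is injective. *)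

theory Defs
  imports "HOL-Algebra.Algebra"
begin

definition collinear :: "'a set set \<Rightarrow> 'a \<Rightarrow> 'a \<Rightarrow> bool" where
  "collinear L x y \<longleftrightarrow> (\<exists>l\<in>L. x \<in> l \<and> y \<in> l)"

definition partial_linear_space :: "'a set \<Rightarrow> 'a set set \<Rightarrow> bool" where
  "partial_linear_space P L \<longleftrightarrow>
     (\<forall>l\<in>L. l \<subseteq> P \<and> card l \<ge> 2) \<and>
     (\<forall>x\<in>P. \<forall>y\<in>P. x \<noteq> y \<longrightarrow> card {l\<in>L. x \<in> l \<and> y \<in> l} \<le> 1)"

definition gq_2t :: "'a set \<Rightarrow> 'a set set \<Rightarrow> nat \<Rightarrow> bool" where
  "gq_2t P L t \<longleftrightarrow>
     partial_linear_space P L \<and>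
     (\<forall>l\<in>L. card l = 3) \<and>
     (\<forall>x\<in>P. card {l\<in>L. x \<in> l} = t + 1) \<and>
     (\<forall>x\<in>P. \<exists>y\<in>P. \<not> collinear L x y) \<and>
     (\<forall>x\<in>P. \<forall>l\<in>L. x \<notin> l \<longrightarrow> (\<exists>!y. y \<in> l \<and> collinear L x y))"

definition klein_four_subgroup :: "('g, 'b) monoid_scheme \<Rightarrow> 'g set \<Rightarrow> bool" where
  "klein_four_subgroup R H \<longleftrightarrow>
     subgroup H R \<and> card H = 4 \<and> (\<forall>h\<in>H. h \<otimes>\<^bsub>R\<^esub> h = \<one>\<^bsub>R\<^esub>)"

text \<open>A representation: psi x = subgroup generated by r x, of order 2.\<close>
definition representation ::
  "'a set \<Rightarrow> 'a set set \<Rightarrow> ('g, 'b) monoid_scheme \<Rightarrow> ('a \<Rightarrow> 'g) \<Rightarrow> bool" where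
  "representation P L R r \<longleftrightarrow>
     group R \<and>
     (\<forall>x\<in>P. r x \<in> carrier R \<and> group.ord R (r x) = 2) \<and>
     generate R (r ` P) = carrier R \<and>
     (\<forall>l\<in>L. \<forall>x y z. l = {x, y, z} \<longrightarrow>
        klein_four_subgroup R {\<one>\<^bsub>R\<^esub>, r x, r y, r z})"

definition faithful_representation ::
  "'a set \<Rightarrow> 'a set set \<Rightarrow> ('g, 'b) monoid_scheme \<Rightarrow> ('a \<Rightarrow> 'g) \<Rightarrow> bool" where
  "faithful_representation P L R r \<longleftrightarrow>
     representation P L R r \<and> inj_on (\<lambda>x. generate R {r x}) P"

end

theory Submission
  imports Defs
begin

locale GQR = group G for G :: "('g,'b) monoid_scheme" (structure) +
  fixes P :: "'a set" and L :: "'a set set" and t :: nat and r :: "'a \<Rightarrow> 'g"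
  assumes finP: "finite P" and gq: "gq_2t P L t"
    and rcar: "\<And>x. x\<in>P \<Longrightarrow> r x \<in> carrier G"
    and klein: "\<And>l x y z. l\<in>L \<Longrightarrow> l = {x,y,z} \<Longrightarrow> klein_four_subgroup G {\<one>, r x, r y, r z}"
    and gen: "generate G (r ` P) = carrier G"
    and rinj: "inj_on r P"
begin

abbreviation col where "col \<equiv> collinear L"

lemmas gq' = gq[unfolded gq_2t_def partial_linear_space_def]
lemmas gqf1 = gq'[THEN conjunct1, THEN conjunct1]
lemmas gqf2 = gq'[THEN conjunct1, THEN conjunct2]
lemmas gqf3 = gq'[THEN conjunct2, THEN conjunct1]
lemmas gqf4 = gq'[THEN conjunct2, THEN conjunct2, THEN conjunct1]
lemmas gqf5 = gq'[THEN conjunct2, THEN conjunct2, THEN conjunct2, THEN conjunct2]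

lemma line_sub: "l \<in> L \<Longrightarrow> l \<subseteq> P"
  using gqf1 by blast

lemma card_line: "l \<in> L \<Longrightarrow> card l = 3"
  using gqf3 by blast

lemma finL: "finite L"
proof -
  have "L \<subseteq> Pow P" using line_sub by blast
  then show ?thesis using finP by (meson finite_Pow_iff finite_subset)
qed

lemma lines_through: "x \<in> P \<Longrightarrow> card {l\<in>L. x \<in> l} = t + 1"
  using gqf4 by blast

lemma uniq_line:
  assumes "x \<noteq> y" "l1 \<in> L" "l2 \<in> L" "x \<in> l1" "y \<in> l1" "x \<in> l2" "y \<in> l2"
  shows "l1 = l2"
proof -
  have xy: "x \<in> P" "y \<in> P" using assms line_sub by auto
  have c: "card {l\<in>L. x \<in> l \<and> y \<in> l} \<le> 1"
    using gqf2 xy assms(1) by blast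
  have f: "finite {l\<in>L. x \<in> l \<and> y \<in> l}" using finL by auto
  have m: "l1 \<in> {l\<in>L. x \<in> l \<and> y \<in> l}" "l2 \<in> {l\<in>L. x \<in> l \<and> y \<in> l}" using assms by auto
  show ?thesis using c card_le_Suc0_iff_eq[OF f] m by simp
qed

lemma gq_ax: "x \<in> P \<Longrightarrow> l \<in> L \<Longrightarrow> x \<notin> l \<Longrightarrow> \<exists>!y. y \<in> l \<and> col x y"
  using gqf5 by blast

lemma ex_col: "x \<in> P \<Longrightarrow> l \<in> L \<Longrightarrow> x \<notin> l \<Longrightarrow> \<exists>y\<in>l. col x y"
  using gq_ax by blast

lemma U: "a \<in> P \<Longrightarrow> l \<in> L \<Longrightarrow> a \<notin> l \<Longrightarrow> u \<in> l \<Longrightarrow> v \<in> l \<Longrightarrow> col a u \<Longrightarrow> col a v \<Longrightarrow> u = v"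
  using gq_ax by blast

lemma U': "a \<in> P \<Longrightarrow> l \<in> L \<Longrightarrow> u \<in> l \<Longrightarrow> v \<in> l \<Longrightarrow> u \<noteq> v \<Longrightarrow> col a u \<Longrightarrow> col a v \<Longrightarrow> a \<in> l"
  using U by blast

lemma col_sym: "col a b \<Longrightarrow> col b a"
  unfolding collinear_def by blast

lemma col_line: "l \<in> L \<Longrightarrow> u \<in> l \<Longrightarrow> v \<in> l \<Longrightarrow> col u v"
  unfolding collinear_def by blast

lemma col_P: "col a b \<Longrightarrow> a \<in> P"
  unfolding collinear_def using line_sub by blast

lemma ex_line: "x \<in> P \<Longrightarrow> \<exists>l\<in>L. x \<in> l"
proof -
  assume "x \<in> P"
  then have "card {l\<in>L. x \<in> l} = t + 1" by (rule lines_through)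
  show ?thesis
  proof (rule ccontr)
    assume "\<not> ?thesis"
    then have "{l\<in>L. x \<in> l} = {}" by auto
    then have "card {l\<in>L. x \<in> l} = 0" by (simp only: card.empty)
    then show False using \<open>card {l\<in>L. x \<in> l} = t + 1\<close> by simp
  qed
qed

lemma col_refl: "x \<in> P \<Longrightarrow> col x x"
  using ex_line unfolding collinear_def by blast

lemma line3: "l \<in> L \<Longrightarrow> \<exists>a b c. l = {a,b,c} \<and> a \<noteq> b \<and> b \<noteq> c \<and> a \<noteq> c"
proof -
  assume "l \<in> L"
  then have "card l = 3" by (rule card_line)
  then show ?thesis by (simp only: card_3_iff)
qed

lemma third: assumes "l \<in> L" "a \<in> l" "b \<in> l" "a \<noteq> b"
  shows "\<exists>c. l = {a,b,c} \<and> c \<noteq> a \<and> c \<noteq> b"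
proof -
  obtain x y z where l: "l = {x,y,z}" "x \<noteq> y" "y \<noteq> z" "x \<noteq> z" using line3[OF assms(1)] by blast
  have "a = x \<and> b = y \<or> a = y \<and> b = x \<or> a = x \<and> b = z \<or> a = z \<and> b = x \<or> a = y \<and> b = z \<or> a = z \<and> b = y"
    using assms(2-4) l by auto
  then show ?thesis
  proof (elim disjE conjE)
    assume "a = x" "b = y" then show ?thesis using l by (intro exI[of _ z]) auto
  next
    assume "a = y" "b = x" then show ?thesis using l by (intro exI[of _ z]) auto
  next
    assume "a = x" "b = z" then show ?thesis using l by (intro exI[of _ y]) auto
  next
    assume "a = z" "b = x" then show ?thesis using l by (intro exI[of _ y]) auto
  next
    assume "a = y" "b = z" then show ?thesis using l by (intro exI[of _ x]) auto
  next
    assume "a = z" "b = y" then show ?thesis using l by (intro exI[of _ x]) auto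
  qed
qed

lemma lcancel: "x \<in> carrier G \<Longrightarrow> y \<in> carrier G \<Longrightarrow> z \<in> carrier G \<Longrightarrow> x \<otimes> y = x \<otimes> z \<Longrightarrow> y = z"
  by (metis Units_eq Units_l_cancel)

lemma klein_prod:
  assumes "l \<in> L" "l = {a,b,c}" "a \<noteq> b" "b \<noteq> c" "a \<noteq> c"
  shows "r a \<otimes> r b = r c" "r a \<otimes> r a = \<one>" "r a \<noteq> \<one>"
proof -
  have K: "klein_four_subgroup G {\<one>, r a, r b, r c}" using klein assms by blast
  have abc: "a \<in> P" "b \<in> P" "c \<in> P" using assms line_sub by auto
  have car: "r a \<in> carrier G" "r b \<in> carrier G" "r c \<in> carrier G" using abc rcar by auto
  have c4: "card {\<one>, r a, r b, r c} = 4" using K unfolding klein_four_subgroup_def by blast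
  have "distinct [\<one>, r a, r b, r c]"
    by (rule card_distinct) (use c4 in simp)
  then have d: "\<one> \<noteq> r a" "\<one> \<noteq> r b" "\<one> \<noteq> r c" "r a \<noteq> r b" "r a \<noteq> r c" "r b \<noteq> r c"
    by auto
  have sq: "\<forall>h\<in>{\<one>, r a, r b, r c}. h \<otimes> h = \<one>" using K unfolding klein_four_subgroup_def by blast
  have sg: "subgroup {\<one>, r a, r b, r c} G" using K unfolding klein_four_subgroup_def by blast
  have "r a \<otimes> r b \<in> {\<one>, r a, r b, r c}" by (rule subgroup.m_closed[OF sg]) auto
  moreover have "r a \<otimes> r b \<noteq> \<one>"
  proof
    assume "r a \<otimes> r b = \<one>"
    then have "r a \<otimes> r b = r a \<otimes> r a" using sq by auto
    then have "r b = r a" using lcancel car by blast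
    then show False using d by simp
  qed
  moreover have "r a \<otimes> r b \<noteq> r a"
  proof
    assume "r a \<otimes> r b = r a"
    then have "r b = \<one>" using car by simp
    then show False using d by simp
  qed
  moreover have "r a \<otimes> r b \<noteq> r b"
  proof
    assume "r a \<otimes> r b = r b"
    then have "r a = \<one>" using car by simp
    then show False using d by simp
  qed
  ultimately show "r a \<otimes> r b = r c" by blast
  show "r a \<otimes> r a = \<one>" using sq by auto
  show "r a \<noteq> \<one>" using d by auto
qed


lemma line_eq:
  assumes "l \<in> L" "a \<in> l" "b \<in> l" "c \<in> l" "a \<noteq> b" "b \<noteq> c" "a \<noteq> c"
  shows "l = {a,b,c}"
proof -
  have f: "finite l" using card_line[OF assms(1)] card.infinite by fastforce
  have s: "{a,b,c} \<subseteq> l" using assms by auto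
  have "card {a,b,c} = 3" using assms(5-7) by simp
  then have "card {a,b,c} = card l" using card_line[OF assms(1)] by simp
  then show ?thesis using card_subset_eq[OF f s] by simp
qed

lemma line_prod:
  assumes "l \<in> L" "a \<in> l" "b \<in> l" "c \<in> l" "a \<noteq> b" "b \<noteq> c" "a \<noteq> c"
  shows "r a \<otimes> r b = r c"
  using klein_prod(1)[OF assms(1) line_eq[OF assms] assms(5-7)] .

lemma rP: "a \<in> P \<Longrightarrow> r a \<in> carrier G" by (rule rcar)

lemma rsq: assumes "a \<in> P" shows "r a \<otimes> r a = \<one>" "r a \<noteq> \<one>"
proof -
  obtain l where l: "l \<in> L" "a \<in> l" using ex_line assms by blast
  obtain x y z where xyz: "l = {x,y,z}" "x \<noteq> y" "y \<noteq> z" "x \<noteq> z" using line3[OF l(1)] by blast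
  have "\<exists>u v. l = {a,u,v} \<and> a \<noteq> u \<and> u \<noteq> v \<and> a \<noteq> v"
  proof -
    have "a = x \<or> a = y \<or> a = z" using l xyz by auto
    then show ?thesis
    proof (elim disjE)
      assume "a = x" then show ?thesis using xyz by blast
    next
      assume "a = y" then show ?thesis using xyz by (intro exI[of _ x] exI[of _ z]) auto
    next
      assume "a = z" then show ?thesis using xyz by (intro exI[of _ x] exI[of _ y]) auto
    qed
  qed
  then obtain u v where "l = {a,u,v}" "a \<noteq> u" "u \<noteq> v" "a \<noteq> v" by blast
  then show "r a \<otimes> r a = \<one>" "r a \<noteq> \<one>" using klein_prod[OF l(1)] by auto
qed

lemma rr1: "a \<in> P \<Longrightarrow> g \<in> carrier G \<Longrightarrow> r a \<otimes> (r a \<otimes> g) = g"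
  by (metis m_assoc rP rsq(1) l_one)

lemma rr2: "a \<in> P \<Longrightarrow> g \<in> carrier G \<Longrightarrow> (g \<otimes> r a) \<otimes> r a = g"
  by (metis m_assoc rP rsq(1) r_one)

lemma rinjD: "a \<in> P \<Longrightarrow> b \<in> P \<Longrightarrow> r a = r b \<Longrightarrow> a = b"
  using rinj by (meson inj_onD)

lemma prod_col:
  assumes "a \<in> P" "b \<in> P" "a \<noteq> b" "col a b"
  shows "\<exists>c l. l \<in> L \<and> a \<in> l \<and> b \<in> l \<and> c \<in> l \<and> c \<noteq> a \<and> c \<noteq> b \<and> c \<in> P \<and>
     r a \<otimes> r b = r c \<and> r b \<otimes> r a = r c"
proof -
  obtain l where l: "l \<in> L" "a \<in> l" "b \<in> l" using assms(4) unfolding collinear_def by blast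
  obtain c where c: "l = {a,b,c}" "c \<noteq> a" "c \<noteq> b" using third[OF l assms(3)] by blast
  have "c \<in> l" using c by auto
  then have "c \<in> P" using line_sub l by auto
  moreover have "r a \<otimes> r b = r c" using line_prod[OF l(1) l(2) l(3) \<open>c \<in> l\<close>] c assms(3) by auto
  moreover have "r b \<otimes> r a = r c" using line_prod[OF l(1) l(3) l(2) \<open>c \<in> l\<close>] c assms(3) by auto
  ultimately show ?thesis using l c \<open>c \<in> l\<close> by blast
qed

lemma comm_col: "a \<in> P \<Longrightarrow> b \<in> P \<Longrightarrow> col a b \<Longrightarrow> r a \<otimes> r b = r b \<otimes> r a"
  using prod_col by (cases "a = b") fastforce+

lemma NC:
  assumes "a \<in> P" "b \<in> P" "c \<in> P" "\<not> col a b" "r a \<otimes> r b = r c"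
  shows "\<not> col a c" "\<not> col b c" "c \<noteq> a" "c \<noteq> b"
proof -
  have ca: "r a \<in> carrier G" "r b \<in> carrier G" "r c \<in> carrier G" using assms rP by auto
  show "c \<noteq> a"
  proof
    assume "c = a" then have "r a \<otimes> r b = r a \<otimes> \<one>" using assms(5) ca by simp
    then have "r b = \<one>" using lcancel ca by blast
    then show False using rsq(2)[OF assms(2)] by simp
  qed
  show "c \<noteq> b"
  proof
    assume "c = b" then have "r a \<otimes> r b = \<one> \<otimes> r b" using assms(5) ca by simp
    then have "r a = \<one>" using ca by (metis l_one r_cancel_one)
    then show False using rsq(2)[OF assms(1)] by simp
  qed
  show "\<not> col a c"
  proof
    assume "col a c"
    then obtain w l where w: "l \<in> L" "a \<in> l" "c \<in> l" "w \<in> l" "w \<in> P" "r a \<otimes> r c = r w"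
      using prod_col[OF assms(1) assms(3)] \<open>c \<noteq> a\<close> by metis
    have "r a \<otimes> r c = r b" using assms(5) rr1[OF assms(1) ca(2)] by simp
    then have "w = b" using w rinjD assms by metis
    then show False using w assms(4) col_line by blast
  qed
  show "\<not> col b c"
  proof
    assume "col b c"
    then have "col c b" by (rule col_sym)
    then obtain w l where w: "l \<in> L" "b \<in> l" "c \<in> l" "w \<in> l" "w \<in> P" "r c \<otimes> r b = r w"
      using prod_col[OF assms(3) assms(2)] \<open>c \<noteq> b\<close> by metis
    have "r c \<otimes> r b = r a" using assms(5) rr2[OF assms(2) ca(1)] by simp
    then have "w = a" using w rinjD assms by metis
    then show False using w assms(4) col_line by blast
  qed
qed


lemma K:
  assumes P: "a \<in> P" "b \<in> P" "c \<in> P" "p \<in> P" and nab: "\<not> col a b"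
    and abc: "r a \<otimes> r b = r c" and pa: "col p a" and pb: "col p b"
  shows "col p c"
proof (rule ccontr)
  assume npc: "\<not> col p c"
  have ca: "r a \<in> carrier G" "r b \<in> carrier G" "r c \<in> carrier G" "r p \<in> carrier G" using P rP by auto
  have pna: "p \<noteq> a" using nab pb by blast
  have pnb: "p \<noteq> b" using nab pa col_sym by blast
  obtain a' l1 where A: "l1 \<in> L" "p \<in> l1" "a \<in> l1" "a' \<in> l1" "a' \<noteq> p" "a' \<noteq> a" "a' \<in> P"
     "r p \<otimes> r a = r a'" "r a \<otimes> r p = r a'" using prod_col[OF P(4) P(1) pna pa] by blast
  obtain b' l2 where B: "l2 \<in> L" "p \<in> l2" "b \<in> l2" "b' \<in> l2" "b' \<noteq> p" "b' \<noteq> b" "b' \<in> P"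
     "r p \<otimes> r b = r b'" "r b \<otimes> r p = r b'" using prod_col[OF P(4) P(2) pnb pb] by blast
  have nac: "\<not> col a c" and nbc: "\<not> col b c" using NC[OF P(1-3) nab abc] by auto
  have cl1: "c \<notin> l1" using npc col_line A by blast
  obtain u where u: "u \<in> l1" "col c u" using ex_col[OF P(3) A(1) cl1] by blast
  have l1eq: "l1 = {p,a,a'}" using line_eq[OF A(1) A(2) A(3) A(4) pna] A by auto
  have "u \<noteq> p" using u npc col_sym by blast
  moreover have "u \<noteq> a" using u nac col_sym by blast
  ultimately have "u = a'" using u l1eq by auto
  then have ca': "col c a'" using u by simp
  have cnb': "c \<noteq> a'" using cl1 A by auto
  have l2b: "b' \<notin> l1"
  proof
    assume "b' \<in> l1"
    then have "l1 = l2" using uniq_line[OF B(5) A(1) B(1) _ A(2) B(4) B(2)] by simp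
    then show False using nab A B col_line by blast
  qed
  have ra'b': "r a' \<otimes> r b' = r c"
  proof -
    have "r a' \<otimes> r b' = (r a \<otimes> r p) \<otimes> (r p \<otimes> r b)" using A B by simp
    also have "\<dots> = r a \<otimes> (r p \<otimes> (r p \<otimes> r b))" using ca by (simp add: m_assoc)
    also have "\<dots> = r a \<otimes> r b" using rr1[OF P(4) ca(2)] by simp
    finally show ?thesis using abc by simp
  qed
  obtain w l3 where W: "l3 \<in> L" "a' \<in> l3" "c \<in> l3" "w \<in> l3" "w \<in> P" "r a' \<otimes> r c = r w"
    using prod_col[OF A(7) P(3) cnb'[symmetric] col_sym[OF ca']] by blast
  have "r a' \<otimes> r c = r b'" using ra'b' rr1[OF A(7) rP[OF B(7)]] by metis
  then have "w = b'" using W rinjD B(7) by metis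
  then have "col b' a'" using W col_line by blast
  moreover have "col b' p" using B col_line by blast
  ultimately have "b' \<in> l1" using U'[OF B(7) A(1) A(4) A(2) A(5)] by blast
  then show False using l2b by simp
qed

definition good where "good a b \<longleftrightarrow> r a \<otimes> r b \<in> r ` P"

lemma B:
  assumes P: "x \<in> P" "y \<in> P" "y' \<in> P" and nxy: "\<not> col x y" and g: "good x y"
    and yy': "col y y'" and nxy': "\<not> col x y'"
  shows "good x y'"
proof (cases "y = y'")
  case True then show ?thesis using g by simp
next
  case False
  obtain z where z: "z \<in> P" "r x \<otimes> r y = r z" using g unfolding good_def by blast
  obtain p l where L1: "l \<in> L" "y \<in> l" "y' \<in> l" "p \<in> l" "p \<noteq> y" "p \<noteq> y'" "p \<in> P"
    using prod_col[OF P(2) P(3) False yy'] by blast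
  have ry': "r p \<otimes> r y = r y'" using line_prod[OF L1(1) L1(4) L1(2) L1(3)] L1 False by auto
  have xl: "x \<notin> l" using nxy col_line L1 by blast
  obtain u where u: "u \<in> l" "col x u" using ex_col[OF P(1) L1(1) xl] by blast
  have leq: "l = {y,y',p}" using line_eq[OF L1(1) L1(2) L1(3) L1(4) False] L1 by auto
  have "u = p" using u leq nxy nxy' by auto
  then have xp: "col x p" using u by simp
  have py: "col p y" using L1 col_line by blast
  have pz: "col p z" using K[OF P(1) P(2) z(1) L1(7) nxy z(2) col_sym[OF xp] py] .
  have "\<not> col y z" using NC[OF P(1) P(2) z(1) nxy z(2)] by simp
  then have pnz: "p \<noteq> z" using py col_sym by blast
  obtain w l' where W: "w \<in> P" "r p \<otimes> r z = r w"
    using prod_col[OF L1(7) z(1) pnz pz] by blast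
  have ca: "r x \<in> carrier G" "r y \<in> carrier G" "r p \<in> carrier G" using P L1 rP by auto
  have "r x \<otimes> r y' = r x \<otimes> (r p \<otimes> r y)" using ry' by simp
  also have "\<dots> = (r x \<otimes> r p) \<otimes> r y" using ca by (simp add: m_assoc)
  also have "\<dots> = (r p \<otimes> r x) \<otimes> r y" using comm_col[OF P(1) L1(7) xp] by simp
  also have "\<dots> = r p \<otimes> r z" using ca z by (simp add: m_assoc)
  finally show ?thesis using W unfolding good_def by auto
qed


lemma two_lines:
  assumes "y \<in> P" "1 \<le> t"
  shows "\<exists>l0 l1. l0 \<in> L \<and> l1 \<in> L \<and> y \<in> l0 \<and> y \<in> l1 \<and> l0 \<noteq> l1"
proof -
  let ?S = "{l\<in>L. y \<in> l}"
  have c: "card ?S = t + 1" using lines_through[OF assms(1)] .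
  have f: "finite ?S" using finL by simp
  obtain l0 where l0: "l0 \<in> ?S" using ex_line[OF assms(1)] by blast
  have "card (?S - {l0}) = t" using card_Diff_singleton[OF l0] c by simp
  then have "?S - {l0} \<noteq> {}" using assms(2) by (metis card.empty not_one_le_zero)
  then obtain l1 where "l1 \<in> ?S - {l0}" by blast
  then show ?thesis using l0 by blast
qed

lemma split_line:
  assumes "x \<in> P" "l \<in> L" "y \<in> l" "\<not> col x y"
  shows "\<exists>p y'. p \<in> l \<and> y' \<in> l \<and> p \<noteq> y \<and> y' \<noteq> y \<and> p \<noteq> y' \<and> col x p \<and> \<not> col x y' \<and> p \<in> P \<and> y' \<in> P"
proof -
  have xl: "x \<notin> l" using assms col_line by blast
  obtain p where p: "p \<in> l" "col x p" using ex_col[OF assms(1) assms(2) xl] by blast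
  have pny: "p \<noteq> y" using p assms(4) by blast
  obtain c where c: "l = {p,y,c}" "c \<noteq> p" "c \<noteq> y" using third[OF assms(2) p(1) assms(3) pny] by blast
  have "\<not> col x c" using U[OF assms(1) assms(2) xl p(1), of c] c p by auto
  then show ?thesis using c p pny line_sub[OF assms(2)] by (intro exI[of _ p] exI[of _ c]) auto
qed

lemma t_pos:
  assumes "x \<in> P" "y \<in> P" "\<not> col x y"
  shows "1 \<le> t"
proof (rule ccontr)
  assume "\<not> 1 \<le> t"
  then have t0: "t = 0" by simp
  obtain l where l: "l \<in> L" "y \<in> l" using ex_line[OF assms(2)] by blast
  have xl: "x \<notin> l" using assms col_line l by blast
  obtain w where w: "w \<in> l" "col x w" using ex_col[OF assms(1) l(1) xl] by blast
  obtain m where m: "m \<in> L" "x \<in> m" "w \<in> m" using w(2) unfolding collinear_def by blast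
  have "m \<noteq> l" using m xl by blast
  have wP: "w \<in> P" using w l line_sub by blast
  have "{l, m} \<subseteq> {l'\<in>L. w \<in> l'}" using l m w by auto
  moreover have "finite {l'\<in>L. w \<in> l'}" using finL by simp
  ultimately have "card {l, m} \<le> card {l'\<in>L. w \<in> l'}" by (rule card_mono[rotated])
  then have "2 \<le> t + 1" using lines_through[OF wP] \<open>m \<noteq> l\<close> by simp
  then show False using t0 by simp
qed

lemma C:
  assumes P: "x \<in> P" "y \<in> P" "w \<in> P" and nxy: "\<not> col x y" and nxw: "\<not> col x w"
    and g: "good x y"
  shows "good x w"
proof (cases "col y w")
  case True then show ?thesis using B[OF P(1,2,3) nxy g True nxw] by simp
next
  case nyw: False
  have t1: "1 \<le> t" using t_pos[OF P(1,2) nxy] .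
  obtain l0 l1 where LL: "l0 \<in> L" "l1 \<in> L" "y \<in> l0" "y \<in> l1" "l0 \<noteq> l1"
    using two_lines[OF P(2) t1] by blast
  obtain p1 y1 where S1: "p1 \<in> l1" "y1 \<in> l1" "p1 \<noteq> y" "y1 \<noteq> y" "p1 \<noteq> y1" "col x p1" "\<not> col x y1" "p1 \<in> P" "y1 \<in> P"
    using split_line[OF P(1) LL(2) LL(4) nxy] by blast
  have g1: "good x y1" using B[OF P(1,2) S1(9) nxy g _ S1(7)] col_line LL S1 by blast
  show ?thesis
  proof (cases "col y1 w")
    case True then show ?thesis using B[OF P(1) S1(9) P(3) S1(7) g1 True nxw] by simp
  next
    case ny1w: False
    obtain p0 y0 where S0: "p0 \<in> l0" "y0 \<in> l0" "p0 \<noteq> y" "y0 \<noteq> y" "p0 \<noteq> y0" "col x p0" "\<not> col x y0" "p0 \<in> P" "y0 \<in> P"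
      using split_line[OF P(1) LL(1) LL(3) nxy] by blast
    have g0: "good x y0" using B[OF P(1,2) S0(9) nxy g _ S0(7)] col_line LL S0 by blast
    have wl0: "w \<notin> l0" using nyw col_line LL by blast
    obtain u where u: "u \<in> l0" "col w u" using ex_col[OF P(3) LL(1) wl0] by blast
    have l0eq: "l0 = {y,p0,y0}" using line_eq[OF LL(1) LL(3) S0(1) S0(2)] S0 by auto
    have "u = y \<or> u = p0 \<or> u = y0" using u l0eq by auto
    moreover have "u \<noteq> y" using u nyw col_sym by blast
    moreover
    { assume "u = y0"
      then have "good x w" using B[OF P(1) S0(9) P(3) S0(7) g0 _ nxw] u col_sym by blast }
    moreover
    { assume up: "u = p0"
      then have wp0: "col w p0" using u by simp
      have wnp0: "w \<noteq> p0" using S0(6) nxw by blast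
      obtain w0 m where M: "m \<in> L" "w \<in> m" "p0 \<in> m" "w0 \<in> m" "w0 \<noteq> w" "w0 \<noteq> p0" "w0 \<in> P"
        using prod_col[OF P(3) S0(8) wnp0 wp0] by blast
      have xm: "x \<notin> m" using nxw col_line M by blast
      have nxw0: "\<not> col x w0" using U[OF P(1) M(1) xm M(4) M(3)] S0(6) M(6) by blast
      have y1m: "y1 \<notin> m" using ny1w col_line M by blast
      obtain v where v: "v \<in> m" "col y1 v" using ex_col[OF S1(9) M(1) y1m] by blast
      have meq: "m = {w,p0,w0}" using line_eq[OF M(1) M(2) M(3) M(4) wnp0] M by auto
      have "v \<noteq> w" using v ny1w by blast
      moreover have "v \<noteq> p0"
      proof
        assume "v = p0"
        then have "col p0 y1" using v col_sym by blast
        moreover have "col p0 y" using S0 LL col_line by blast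
        ultimately have "p0 \<in> l1" using U'[OF S0(8) LL(2) S1(2) LL(4) S1(4)] by blast
        then have "l0 = l1" using uniq_line[OF S0(3) LL(1) LL(2) S0(1) LL(3)] LL by blast
        then show False using LL by simp
      qed
      ultimately have "v = w0" using v meq by auto
      then have "col y1 w0" using v by simp
      then have "good x w0" using B[OF P(1) S1(9) M(7) S1(7) g1 _ nxw0] by blast
      moreover have "col w0 w" using M col_line by blast
      ultimately have "good x w" using B[OF P(1) M(7) P(3) nxw0] nxw by blast }
    ultimately show ?thesis by blast
  qed
qed


lemma good_sym:
  assumes "a \<in> P" "b \<in> P" "good a b" shows "good b a"
proof -
  obtain c where c: "c \<in> P" "r a \<otimes> r b = r c" using assms(3) unfolding good_def by blast
  have ca: "r a \<in> carrier G" "r b \<in> carrier G" "r c \<in> carrier G" using assms c rP by auto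
  have "r c \<otimes> (r b \<otimes> r a) = (r a \<otimes> (r b \<otimes> r b)) \<otimes> r a" using c(2)[symmetric] ca by (simp add: m_assoc)
  also have "\<dots> = \<one>" using rsq(1)[OF assms(1)] rsq(1)[OF assms(2)] ca by simp
  also have "\<dots> = r c \<otimes> r c" using rsq(1)[OF c(1)] by simp
  finally have "r b \<otimes> r a = r c" using lcancel ca by (meson m_closed)
  then show ?thesis using c unfolding good_def by auto
qed

lemma D:
  assumes base: "x0 \<in> P" "y0 \<in> P" "\<not> col x0 y0" "good x0 y0"
    and ab: "a \<in> P" "b \<in> P" "\<not> col a b"
  shows "good a b"
proof -
  have t1: "1 \<le> t" using t_pos[OF base(1-3)] .
  have full: "\<And>u v w. u \<in> P \<Longrightarrow> v \<in> P \<Longrightarrow> \<not> col u v \<Longrightarrow> good u v \<Longrightarrow> w \<in> P \<Longrightarrow> \<not> col u w \<Longrightarrow> good u w"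
    using C by blast
  have fx: "\<And>w. w \<in> P \<Longrightarrow> \<not> col x0 w \<Longrightarrow> good x0 w" using full base by blast
  have "\<exists>v\<in>P. \<not> col a v \<and> good a v"
  proof (cases "col x0 a")
    case False
    then have "good a x0" using good_sym fx ab base by blast
    then show ?thesis using False col_sym base by blast
  next
    case True
    show ?thesis
    proof (cases "a = x0")
      case True then show ?thesis using base by blast
    next
      case anx: False
      obtain a2 n where N: "n \<in> L" "x0 \<in> n" "a \<in> n" "a2 \<in> n" "a2 \<noteq> x0" "a2 \<noteq> a" "a2 \<in> P"
        using prod_col[OF base(1) ab(1) anx[symmetric] True] by blast
      obtain m0 m1 where LL: "m0 \<in> L" "m1 \<in> L" "a2 \<in> m0" "a2 \<in> m1" "m0 \<noteq> m1"
        using two_lines[OF N(7) t1] by blast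
      obtain m where m: "m \<in> L" "a2 \<in> m" "m \<noteq> n" using LL by metis
      obtain i j k where ijk: "m = {i,j,k}" "i \<noteq> j" "j \<noteq> k" "i \<noteq> k" using line3[OF m(1)] by blast
      obtain v where v: "v \<in> m" "v \<noteq> a2" using ijk by blast
      have vP: "v \<in> P" using v m line_sub by blast
      have x0m: "x0 \<notin> m" using uniq_line[OF N(5)[symmetric] N(1) m(1) N(2) N(4) _ m(2)] m(3) by blast
      have am: "a \<notin> m" using uniq_line[OF N(6)[symmetric] N(1) m(1) N(3) N(4) _ m(2)] m(3) by blast
      have "\<not> col x0 v" using U[OF base(1) m(1) x0m m(2) v(1)] v(2) col_line N by blast
      then have "good x0 v" using fx vP by blast
      then have gv: "good v x0" using good_sym base vP by blast
      have "\<not> col a v" using U[OF ab(1) m(1) am m(2) v(1)] v(2) col_line N by blast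
      then have "good v a" using full[OF vP base(1) _ gv ab(1)] \<open>\<not> col x0 v\<close> col_sym by blast
      then have "good a v" using good_sym vP ab by blast
      then show ?thesis using \<open>\<not> col a v\<close> vP by blast
    qed
  qed
  then obtain v where "v \<in> P" "\<not> col a v" "good a v" by blast
  then show ?thesis using full ab by blast
qed


lemma UNc:
  assumes "finite I" "\<And>i. i \<in> I \<Longrightarrow> A i \<subseteq> P" "\<And>i. i \<in> I \<Longrightarrow> card (A i) = k"
    "\<And>i j. i \<in> I \<Longrightarrow> j \<in> I \<Longrightarrow> i \<noteq> j \<Longrightarrow> A i \<inter> A j = {}"
  shows "card (\<Union>i\<in>I. A i) = k * card I"
proof -
  have "card (\<Union>i\<in>I. A i) = (\<Sum>i\<in>I. card (A i))"
  proof (rule card_UN_disjoint)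
    show "finite I" by (rule assms(1))
    show "\<forall>i\<in>I. finite (A i)" using assms(2) finP by (meson finite_subset)
    show "\<forall>i\<in>I. \<forall>j\<in>I. i \<noteq> j \<longrightarrow> A i \<inter> A j = {}" using assms(4) by blast
  qed
  also have "\<dots> = (\<Sum>i\<in>I. k)" using assms(3) by simp
  finally show ?thesis by simp
qed

lemma card_minus_pt: assumes "l \<in> L" "p \<in> l" shows "card (l - {p}) = 2"
proof -
  have "card (l - {p}) = card l - 1" by (rule card_Diff_singleton[OF assms(2)])
  then show ?thesis using card_line[OF assms(1)] by simp
qed

lemma lines_minus_pt:
  assumes "p \<in> P" "M \<subseteq> {l\<in>L. p \<in> l}"
  shows "card (\<Union>l\<in>M. l - {p}) = 2 * card M"
proof (rule UNc)
  have "M \<subseteq> L" using assms(2) by blast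
  then show "finite M" using finL by (rule finite_subset)
  show "\<And>i. i \<in> M \<Longrightarrow> i - {p} \<subseteq> P" using assms(2) line_sub by blast
  show "\<And>i. i \<in> M \<Longrightarrow> card (i - {p}) = 2" using assms(2) card_minus_pt by blast
  show "\<And>i j. i \<in> M \<Longrightarrow> j \<in> M \<Longrightarrow> i \<noteq> j \<Longrightarrow> (i - {p}) \<inter> (j - {p}) = {}"
  proof -
    fix i j assume ij: "i \<in> M" "j \<in> M" "i \<noteq> j"
    show "(i - {p}) \<inter> (j - {p}) = {}"
    proof (rule ccontr)
      assume "(i - {p}) \<inter> (j - {p}) \<noteq> {}"
      then obtain z where z: "z \<in> i" "z \<in> j" "z \<noteq> p" by blast
      have "i = j" using uniq_line[OF z(3)] z ij assms(2) by blast
      then show False using ij by simp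
    qed
  qed
qed

definition perp where "perp x = {u\<in>P. col x u}"
definition Gam where "Gam x = {u\<in>P. \<not> col x u}"

lemma card_perp:
  assumes "x \<in> P" shows "card (perp x) = 2 * t + 3"
proof -
  define U where "U = (\<Union>l\<in>{l\<in>L. x \<in> l}. l - {x})"
  have eq: "perp x = insert x (\<Union>l\<in>{l\<in>L. x \<in> l}. l - {x})"
  proof (intro equalityI subsetI)
    fix u
    assume "u \<in> perp x"
    then have "u \<in> P" "col x u" unfolding perp_def by auto
    then obtain l where "l \<in> L" "x \<in> l" "u \<in> l" unfolding collinear_def by blast
    then show "u \<in> insert x (\<Union>l\<in>{l\<in>L. x \<in> l}. l - {x})" by blast
  next
    fix u
    assume "u \<in> insert x (\<Union>l\<in>{l\<in>L. x \<in> l}. l - {x})"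
    then consider "u = x" | l where "l \<in> L" "x \<in> l" "u \<in> l" by blast
    then show "u \<in> perp x"
    proof cases
      case 1 then show ?thesis using col_refl[OF assms] assms unfolding perp_def by simp
    next
      case 2 then show ?thesis using line_sub col_line unfolding perp_def by blast
    qed
  qed
  have "card (\<Union>l\<in>{l\<in>L. x \<in> l}. l - {x}) = 2 * (t + 1)"
    using lines_minus_pt[OF assms, of "{l\<in>L. x \<in> l}"] lines_through[OF assms] by simp
  moreover have "finite (\<Union>l\<in>{l\<in>L. x \<in> l}. l - {x})"
  proof (rule finite_subset[OF _ finP])
    show "(\<Union>l\<in>{l\<in>L. x \<in> l}. l - {x}) \<subseteq> P" using line_sub by blast
  qed
  ultimately have "card U = 2 * (t + 1)" "finite U" unfolding U_def by simp_all
  moreover have "x \<notin> U" unfolding U_def by blast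
  moreover have "perp x = insert x U" using eq unfolding U_def .
  ultimately show ?thesis by simp
qed

lemma dcount:
  assumes "finite A" "finite B"
  shows "(\<Sum>a\<in>A. card {b\<in>B. R a b}) = (\<Sum>b\<in>B. card {a\<in>A. R a b})"
proof -
  have "(\<Sum>a\<in>A. card {b\<in>B. R a b}) = (\<Sum>a\<in>A. \<Sum>b\<in>B. if R a b then 1 else 0)"
  proof (rule sum.cong[OF refl])
    fix a assume "a \<in> A"
    have "card {b\<in>B. R a b} = (\<Sum>b\<in>{b\<in>B. R a b}. 1)" by (rule card_eq_sum)
    also have "\<dots> = (\<Sum>b\<in>B. if R a b then 1 else 0)" by (rule sum.inter_filter[OF assms(2)])
    finally show "card {b\<in>B. R a b} = (\<Sum>b\<in>B. if R a b then 1 else 0)" .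
  qed
  also have "\<dots> = (\<Sum>b\<in>B. \<Sum>a\<in>A. if R a b then 1 else 0)" by (rule sum.swap)
  also have "\<dots> = (\<Sum>b\<in>B. card {a\<in>A. R a b})"
  proof (rule sum.cong[OF refl])
    fix b assume "b \<in> B"
    have "card {a\<in>A. R a b} = (\<Sum>a\<in>{a\<in>A. R a b}. 1)" by (rule card_eq_sum)
    also have "\<dots> = (\<Sum>a\<in>A. if R a b then 1 else 0)" by (rule sum.inter_filter[OF assms(1)])
    finally show "(\<Sum>a\<in>A. if R a b then 1 else 0) = card {a\<in>A. R a b}" by simp
  qed
  finally show ?thesis .
qed


lemma card_Gam:
  assumes xP: "x \<in> P" shows "card (Gam x) = 4 * t"
proof -
  define Px where "Px = perp x - {x}"
  have xperp: "x \<in> perp x" using col_refl[OF xP] xP unfolding perp_def by simp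
  have cPx: "card Px = 2 * t + 2" using card_perp[OF xP] xperp card_Diff_singleton[OF xperp]
    unfolding Px_def by simp
  have finPx: "finite Px" unfolding Px_def perp_def using finP by simp
  have finG: "finite (Gam x)" unfolding Gam_def using finP by simp
  have c1: "card {p\<in>Px. col y p} = t + 1" if y: "y \<in> Gam x" for y
  proof -
    have yP: "y \<in> P" and nxy: "\<not> col x y" using y unfolding Gam_def by auto
    have eq: "{p\<in>Px. col y p} = (\<Union>l\<in>{l\<in>L. y \<in> l}. {p\<in>l. col x p})"
    proof (intro equalityI subsetI)
      fix p assume "p \<in> {p\<in>Px. col y p}"
      then have "col y p" "col x p" unfolding Px_def perp_def by auto
      then obtain l where "l \<in> L" "y \<in> l" "p \<in> l" unfolding collinear_def by blast
      then show "p \<in> (\<Union>l\<in>{l\<in>L. y \<in> l}. {p\<in>l. col x p})" using \<open>col x p\<close> by blast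
    next
      fix p assume "p \<in> (\<Union>l\<in>{l\<in>L. y \<in> l}. {p\<in>l. col x p})"
      then obtain l where l: "l \<in> L" "y \<in> l" "p \<in> l" "col x p" by blast
      have "x \<notin> l" using l nxy col_line by blast
      then have "p \<noteq> x" using l by blast
      moreover have "p \<in> P" using l line_sub by blast
      moreover have "col y p" using l col_line by blast
      ultimately show "p \<in> {p\<in>Px. col y p}" using l unfolding Px_def perp_def by blast
    qed
    have "card (\<Union>l\<in>{l\<in>L. y \<in> l}. {p\<in>l. col x p}) = 1 * card {l\<in>L. y \<in> l}"
    proof (rule UNc)
      show "finite {l\<in>L. y \<in> l}" using finL by simp
      show "\<And>i. i \<in> {l\<in>L. y \<in> l} \<Longrightarrow> {p\<in>i. col x p} \<subseteq> P" using line_sub by blast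
      show "card {p\<in>i. col x p} = 1" if i: "i \<in> {l\<in>L. y \<in> l}" for i
      proof -
        have "x \<notin> i" using i nxy col_line by blast
        then obtain q where q: "q \<in> i" "col x q" "\<And>q'. q' \<in> i \<Longrightarrow> col x q' \<Longrightarrow> q' = q"
          using gq_ax[OF xP _ ] i by blast
        then have "{p\<in>i. col x p} = {q}" by blast
        then show ?thesis by simp
      qed
      show "{p\<in>i. col x p} \<inter> {p\<in>j. col x p} = {}"
        if ij: "i \<in> {l\<in>L. y \<in> l}" "j \<in> {l\<in>L. y \<in> l}" "i \<noteq> j" for i j
      proof (rule ccontr)
        assume "{p\<in>i. col x p} \<inter> {p\<in>j. col x p} \<noteq> {}"
        then obtain p where p: "p \<in> i" "p \<in> j" "col x p" by blast
        have "p \<noteq> y" using p nxy by blast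
        then have "i = j" using uniq_line[of p y i j] p ij by blast
        then show False using ij by simp
      qed
    qed
    then show ?thesis using eq lines_through[OF yP] by simp
  qed
  have c2: "card {y\<in>Gam x. col y p} = 2 * t" if p: "p \<in> Px" for p
  proof -
    have pP: "p \<in> P" and xp: "col x p" and pnx: "p \<noteq> x" using p unfolding Px_def perp_def by auto
    obtain n where n: "n \<in> L" "x \<in> n" "p \<in> n" using xp unfolding collinear_def by blast
    define M where "M = {l\<in>L. p \<in> l} - {n}"
    have cM: "card M = t" unfolding M_def using lines_through[OF pP] n
      by (subst card_Diff_singleton) auto
    have eq: "{y\<in>Gam x. col y p} = (\<Union>l\<in>M. l - {p})"
    proof (intro equalityI subsetI)
      fix y assume "y \<in> {y\<in>Gam x. col y p}"
      then have y: "y \<in> P" "\<not> col x y" "col y p" unfolding Gam_def by auto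
      then obtain l where l: "l \<in> L" "y \<in> l" "p \<in> l" unfolding collinear_def by blast
      have "y \<noteq> p" using y xp by blast
      moreover have "l \<noteq> n" using l n y(2) col_line by blast
      ultimately show "y \<in> (\<Union>l\<in>M. l - {p})" using l unfolding M_def by blast
    next
      fix y assume "y \<in> (\<Union>l\<in>M. l - {p})"
      then obtain l where l: "l \<in> L" "p \<in> l" "l \<noteq> n" "y \<in> l" "y \<noteq> p" unfolding M_def by blast
      have "x \<notin> l"
      proof
        assume xl: "x \<in> l"
        have "l = n" by (rule uniq_line[OF pnx[symmetric] l(1) n(1) xl l(2) n(2) n(3)])
        then show False using l(3) by simp
      qed
      then have "\<not> col x y" using U[OF xP l(1) _ l(4) l(2)] xp l(5) by blast
      moreover have "y \<in> P" using l line_sub by blast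
      moreover have "col y p" using l col_line by blast
      ultimately show "y \<in> {y\<in>Gam x. col y p}" unfolding Gam_def by blast
    qed
    have "card (\<Union>l\<in>M. l - {p}) = 2 * card M"
      by (rule lines_minus_pt[OF pP]) (auto simp: M_def)
    then show ?thesis using eq cM by simp
  qed
  have "(\<Sum>y\<in>Gam x. card {p\<in>Px. col y p}) = (\<Sum>p\<in>Px. card {y\<in>Gam x. col y p})"
    by (rule dcount[OF finG finPx])
  also have "\<dots> = (\<Sum>p\<in>Px. 2 * t)" using c2 by simp
  finally have "(\<Sum>y\<in>Gam x. t + 1) = (\<Sum>p\<in>Px. 2 * t)" using c1 by simp
  then have "card (Gam x) * (t + 1) = (2 * t + 2) * (2 * t)" using cPx by simp
  then have "card (Gam x) * (t + 1) = (4 * t) * (t + 1)" by (simp add: algebra_simps)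
  then show ?thesis using mult_right_cancel[of "t + 1" "card (Gam x)" "4 * t"] by simp
qed

lemma card_P: assumes "x \<in> P" shows "card P = 6 * t + 3"
proof -
  have "P = perp x \<union> Gam x" "perp x \<inter> Gam x = {}" unfolding perp_def Gam_def by auto
  moreover have "finite (perp x)" "finite (Gam x)" unfolding perp_def Gam_def using finP by auto
  ultimately have "card P = card (perp x) + card (Gam x)" by (metis card_Un_disjoint)
  then show ?thesis using card_perp[OF assms] card_Gam[OF assms] by simp
qed


lemma inv_r: "a \<in> P \<Longrightarrow> inv (r a) = r a"
  using inv_equality rsq(1) rP by blast

lemma final:
  assumes base: "x0 \<in> P" "y0 \<in> P" "\<not> col x0 y0" "good x0 y0"
  shows "t = 2 \<and> order G = 16"
proof -
  have t1: "1 \<le> t" using t_pos[OF base(1-3)] .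
  have allp: "r a \<otimes> r b \<in> insert \<one> (r ` P)" if ab: "a \<in> P" "b \<in> P" for a b
  proof (cases "a = b")
    case True then show ?thesis using rsq(1)[OF ab(1)] by simp
  next
    case False
    show ?thesis
    proof (cases "col a b")
      case True
      then obtain c where "c \<in> P" "r a \<otimes> r b = r c" using prod_col[OF ab False] by blast
      then show ?thesis by simp
    next
      case nc: False
      then have "good a b" using D[OF base ab nc] by simp
      then show ?thesis unfolding good_def by simp
    qed
  qed
  define S where "S = insert \<one> (r ` P)"
  have subS: "S \<subseteq> carrier G" unfolding S_def using rP by auto
  have sgS: "subgroup S G"
  proof (rule subgroupI)
    show "S \<subseteq> carrier G" by (rule subS)
    show "S \<noteq> {}" unfolding S_def by simp
    show "inv a \<in> S" if "a \<in> S" for a using that inv_r unfolding S_def by auto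
    show "a \<otimes> b \<in> S" if "a \<in> S" "b \<in> S" for a b
      using that allp rP unfolding S_def by auto
  qed
  have "carrier G \<subseteq> S" using generate_subgroup_incl[OF _ sgS] gen unfolding S_def by auto
  then have carS: "carrier G = S" using subS by auto
  have one_nin: "\<one> \<notin> r ` A" if "A \<subseteq> P" for A
  proof
    assume "\<one> \<in> r ` A"
    then obtain a where "a \<in> A" "\<one> = r a" by blast
    then show False using rsq(2)[of a] that by auto
  qed
  have "card S = card P + 1" unfolding S_def using one_nin[of P] finP card_image[OF rinj] by simp
  then have ordG: "order G = 6 * t + 4" using carS card_P[OF base(1)] unfolding order_def by simp
  define H where "H = insert \<one> (r ` perp x0)"
  have perpP: "perp x0 \<subseteq> P" unfolding perp_def by auto
  have sgH: "subgroup H G"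
  proof (rule subgroupI)
    show "H \<subseteq> carrier G" unfolding H_def using rP perpP by auto
    show "H \<noteq> {}" unfolding H_def by simp
    show "inv a \<in> H" if "a \<in> H" for a using that inv_r perpP unfolding H_def by auto
    have pm: "r u \<otimes> r v \<in> H" if uv: "u \<in> perp x0" "v \<in> perp x0" for u v
    proof -
      have u: "u \<in> P" "col x0 u" and v: "v \<in> P" "col x0 v" using uv unfolding perp_def by auto
      show ?thesis
      proof (cases "u = v")
        case True then show ?thesis using rsq(1)[OF u(1)] unfolding H_def by simp
      next
        case False
        show ?thesis
        proof (cases "col u v")
          case True
          obtain c l where cl: "l \<in> L" "u \<in> l" "v \<in> l" "c \<in> l" "c \<in> P" "r u \<otimes> r v = r c"
            using prod_col[OF u(1) v(1) False True] by blast
          have "x0 \<in> l" using U'[OF base(1) cl(1) cl(2) cl(3) False u(2) v(2)] .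
          then have "c \<in> perp x0" using cl col_line unfolding perp_def by blast
          then show ?thesis using cl unfolding H_def by simp
        next
          case nc: False
          obtain c where c: "c \<in> P" "r u \<otimes> r v = r c" using D[OF base u(1) v(1) nc] unfolding good_def by blast
          have "col x0 c" using K[OF u(1) v(1) c(1) base(1) nc c(2)] u v col_sym by blast
          then show ?thesis using c unfolding H_def perp_def by simp
        qed
      qed
    qed
    show "a \<otimes> b \<in> H" if "a \<in> H" "b \<in> H" for a b
      using that pm rP perpP unfolding H_def by auto
  qed
  have "card H = card (perp x0) + 1"
    unfolding H_def using one_nin[OF perpP] finite_subset[OF perpP finP]
      card_image[OF inj_on_subset[OF rinj perpP]] by simp
  then have cH: "card H = 2 * t + 4" using card_perp[OF base(1)] by simp
  have "card (rcosets H) * card H = order G" by (rule lagrange[OF sgH])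
  then have dv: "(2 * t + 4) dvd (6 * t + 4)" using cH ordG by (metis dvd_triv_right)
  have "(2 * t + 4) dvd (3 * (2 * t + 4))" by (rule dvd_triv_right)
  then have "(2 * t + 4) dvd (3 * (2 * t + 4) - (6 * t + 4))" using dv by (rule dvd_diff_nat)
  then have d8: "(2 * t + 4) dvd 8" by simp
  then have "2 * t + 4 \<le> 8" by (rule dvd_imp_le) simp
  then have "t = 1 \<or> t = 2" using t1 by auto
  moreover have "t \<noteq> 1" using d8 by auto
  ultimately have "t = 2" by simp
  then show ?thesis using ordG by simp
qed

end

theorem proposition3p3:
  fixes P :: "'a set" and L :: "'a set set" and t :: nat
    and R :: "('g, 'b) monoid_scheme" and r :: "'a \<Rightarrow> 'g"
  assumes "finite P"
    and "gq_2t P L t"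
    and "faithful_representation P L R r"
    and "(t, order R) \<noteq> (2, 2 ^ 4)"
    and "x \<in> P" and "y \<in> P" and "x \<noteq> y"
    and "r x \<otimes>\<^bsub>R\<^esub> r y \<in> r ` P"
  shows "collinear L x y"
proof (rule ccontr)
  assume nc: "\<not> collinear L x y"
  have rep: "representation P L R r" and fi: "inj_on (\<lambda>x. generate R {r x}) P"
    using assms(3) unfolding faithful_representation_def by auto
  have grp: "group R" and rc: "\<And>x. x \<in> P \<Longrightarrow> r x \<in> carrier R"
    and gen: "generate R (r ` P) = carrier R"
    and kl: "\<And>l x y z. l \<in> L \<Longrightarrow> l = {x,y,z} \<Longrightarrow> klein_four_subgroup R {\<one>\<^bsub>R\<^esub>, r x, r y, r z}"
    using rep unfolding representation_def by auto
  have "inj_on ((\<lambda>g. generate R {g}) \<circ> r) P" using fi by (simp add: comp_def)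
  then have ri: "inj_on r P" by (rule inj_on_imageI2)
  have "GQR R P L t r"
    unfolding GQR_def GQR_axioms_def using grp assms(1,2) rc gen kl ri by blast
  then interpret Q: GQR R P L t r .
  have "Q.good x y" unfolding Q.good_def using assms(8) .
  then have "t = 2 \<and> order R = 16" using Q.final[OF assms(5) assms(6) nc] by blast
  then show False using assms(4) by simp
qed

end
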